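(* Let $n\ge1$, let $I\subset\mathbb R$ be an interval, $x_*\in I$, and $y\in C^{2n+1,1}(I)$ with $$y(x)=y_*+a_{2n+1}(x-x_* )^{2n+1}+a_{2n+2}(x)(x-x_* )^{2n+2}\qquad(x\in I),$$ where $y_*\in\mathbb R$, $a_{2n+1}>0$ is a constant and $a_{2n+2}:I\to\mathbb R$ is continuous. Let $$J:=\Bigl\{x\in I:\ |a_{2n+2}(x)|^{2n+1}|y(x)-y_*|<a_{2n+1}^{2n+2}R_n^{2n+1},\ \ \tfrac{(2n+2)a_{2n+2}(x)(x-x_* )}{(2n+1)a_{2n+1}}>-1\Bigr\},$$ and let $\tilde J$ be the connected component of $J$ containing $x_*$. Then for all $x\in\tilde J$, $$x-x_*=\Bigl(\tfrac{y(x)-y_*}{a_{2n+1}}\Bigr)^{\frac1{2n+1}}\sum_{j=0}^\infty\Bigl(\tfrac{-a_{2n+2}(x)}{(2n+1)a_{2n+1}}\Bigr)^jc_j^n\Bigl(\tfrac{y(x)-y_*}{a_{2n+1}}\Bigr)^{\frac j{2n+1}}.$$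
   Context: $s^{1/(2n+1)}$ is the real odd root. The sequence $(c_j^n)_{j\ge0}$ is defined recursively by $c_0^n:=1$ and $c_m^n:=\sum_{\ell_1+\dots+\ell_{2n+2}=m-1}c^n_{\ell_1}\cdots c^n_{\ell_{2n+2}}-\tfrac1{2n+1}\sum_{j_1+\dots+j_{2n+1}=m,\ 0\le j_i\le m-1}c^n_{j_1}\cdots c^n_{j_{2n+1}}$ (indices nonnegative integers). $R_n:=\frac{2n+1}{\limsup_{j\to\infty}|c_j^n|^{1/j}}$, which is positive (the power series $\bar y_n(z)=\sum_j\frac{(-1)^j}{(2n+1)^j}c_j^nz^j$ has radius of convergence $R_n>0$, and $y_0(x)=x^{1/(2n+1)}\bar y_n(x^{1/(2n+1)})$ solves $-x+y_0^{2n+1}+y_0^{2n+2}=0$). *)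

theory Defs
  imports "HOL-Analysis.Analysis"
begin

definition compositions :: "nat \<Rightarrow> nat \<Rightarrow> (nat \<Rightarrow> nat) set" where
  "compositions k m = {l \<in> PiE {..<k} (\<lambda>_. {..m}). (\<Sum>i<k. l i) = m}"

(* one step of the recursion for c^n_m, given the values g(0..m-1) *)
definition c_step :: "nat \<Rightarrow> (nat \<Rightarrow> real) \<Rightarrow> nat \<Rightarrow> real" where
  "c_step n g m =
     (if m = 0 then 1
      else (\<Sum>l\<in>compositions (2*n+2) (m-1). \<Prod>i<2*n+2. g (l i))
           - 1 / real (2*n+1) *
             (\<Sum>j\<in>{j\<in>compositions (2*n+1) m. \<forall>i<2*n+1. j i \<le> m-1}. \<Prod>i<2*n+1. g (j i)))"

(* c_table n m holds c^n_0, ..., c^n_{m-1} at indices 0..m-1 *)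
primrec c_table :: "nat \<Rightarrow> nat \<Rightarrow> nat \<Rightarrow> real" where
  "c_table n 0 = (\<lambda>_. 0)"
| "c_table n (Suc m) = (c_table n m)(m := c_step n (c_table n m) m)"

definition c_seq :: "nat \<Rightarrow> nat \<Rightarrow> real" where
  "c_seq n j = c_table n (Suc j) j"

(* R_n = (2n+1) / limsup |c^n_j|^(1/j), as an extended real (1/0 = \<infinity>) *)
definition R_rad :: "nat \<Rightarrow> ereal" where
  "R_rad n = ereal (real (2*n+1)) / Limsup sequentially (\<lambda>j. ereal (root j \<bar>c_seq n j\<bar>))"

(* y \<in> C^{k,1}(I): k times differentiable on I (one-sided at endpoints), k-th derivative Lipschitz *)
definition C_k_1 :: "nat \<Rightarrow> real set \<Rightarrow> (real \<Rightarrow> real) \<Rightarrow> bool" where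
  "C_k_1 k I y \<longleftrightarrow> (\<exists>D :: nat \<Rightarrow> real \<Rightarrow> real. (\<forall>x\<in>I. D 0 x = y x) \<and>
      (\<forall>i<k. \<forall>x\<in>I. (D i has_real_derivative D (Suc i) x) (at x within I)) \<and>
      (\<exists>L. L-lipschitz_on I (D k)))"

end

theory Submission
  imports Defs "HOL-Analysis.FPS_Convergence"
begin

lemma c_table_eq: "j < m \<Longrightarrow> c_table n m j = c_seq n j"
proof (induction m)
  case 0 then show ?case by simp
next
  case (Suc m)
  show ?case
  proof (cases "j = m")
    case True then show ?thesis by (simp add: c_seq_def)
  next
    case False then show ?thesis using Suc by simp
  qed
qed

lemma c_step_cong:
  assumes "\<And>i. i < m \<Longrightarrow> g i = g' i"
  shows "c_step n g m = c_step n g' m"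
proof (cases "m = 0")
  case True then show ?thesis by (simp add: c_step_def)
next
  case False
  have 1: "(\<Sum>l\<in>compositions (2*n+2) (m-1). \<Prod>i<2*n+2. g (l i)) =
           (\<Sum>l\<in>compositions (2*n+2) (m-1). \<Prod>i<2*n+2. g' (l i))"
  proof (intro sum.cong refl prod.cong)
    fix l i assume "l \<in> compositions (2*n+2) (m-1)" "i \<in> {..<2*n+2}"
    then have "l i \<le> m - 1" by (auto simp: compositions_def PiE_def Pi_def)
    then show "g (l i) = g' (l i)" using False assms by simp
  qed
  have 2: "(\<Sum>j\<in>{j\<in>compositions (2*n+1) m. \<forall>i<2*n+1. j i \<le> m-1}. \<Prod>i<2*n+1. g (j i)) =
           (\<Sum>j\<in>{j\<in>compositions (2*n+1) m. \<forall>i<2*n+1. j i \<le> m-1}. \<Prod>i<2*n+1. g' (j i))"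
  proof (intro sum.cong refl prod.cong)
    fix l i assume "l \<in> {j\<in>compositions (2*n+1) m. \<forall>i<2*n+1. j i \<le> m-1}" "i \<in> {..<2*n+1}"
    then have "l i \<le> m - 1" by auto
    then show "g (l i) = g' (l i)" using False assms by simp
  qed
  show ?thesis using 1 2 by (simp add: c_step_def)
qed

lemma c_seq_rec: "c_seq n m = c_step n (c_seq n) m"
proof -
  have "c_seq n m = c_step n (c_table n m) m" by (simp add: c_seq_def)
  also have "\<dots> = c_step n (c_seq n) m" by (rule c_step_cong) (simp add: c_table_eq)
  finally show ?thesis .
qed

lemma c_seq_0: "c_seq n 0 = 1"
  by (simp add: c_seq_def c_step_def)

lemma finite_compositions: "finite (compositions k m)"
  unfolding compositions_def by (rule finite_subset[of _ "PiE {..<k} (\<lambda>_. {..m})"]) (auto intro: finite_PiE)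

lemma fps_power_compositions:
  fixes a :: "'a::comm_ring_1 fps"
  assumes "k \<ge> 1"
  shows "fps_nth (a ^ k) m = (\<Sum>l\<in>compositions k m. \<Prod>i<k. fps_nth a (l i))"
proof -
  obtain k' where k: "k = Suc k'" using assms by (cases k) auto
  have "fps_nth (a ^ k) m = (\<Sum>v\<in>natpermute m k. \<Prod>j\<in>{0..k'}. fps_nth a (v!j))"
    using fps_power_nth_Suc[of a k' m] k by simp
  also have "\<dots> = (\<Sum>l\<in>compositions k m. \<Prod>j\<in>{0..k'}. fps_nth a (map l [0..<k] ! j))"
  proof (rule sum.reindex_bij_betw[symmetric])
    show "bij_betw (\<lambda>l. map l [0..<k]) (compositions k m) (natpermute m k)"
    proof (rule bij_betw_byWitness[where f' = "\<lambda>v i. if i < k then v ! i else undefined"])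
      show "\<forall>l\<in>compositions k m. (\<lambda>i. if i < k then map l [0..<k] ! i else undefined) = l"
        by (auto simp: compositions_def PiE_def extensional_def)
      show "\<forall>v\<in>natpermute m k. map (\<lambda>i. if i < k then v ! i else undefined) [0..<k] = v"
      proof
        fix v assume "v \<in> natpermute m k"
        then have "length v = k" by (simp add: natpermute_def)
        then show "map (\<lambda>i. if i < k then v ! i else undefined) [0..<k] = v"
          by (intro nth_equalityI) auto
      qed
      show "(\<lambda>l. map l [0..<k]) ` compositions k m \<subseteq> natpermute m k"
      proof
        fix v assume "v \<in> (\<lambda>l. map l [0..<k]) ` compositions k m"
        then obtain l where l: "l \<in> compositions k m" "v = map l [0..<k]" by auto
        have "sum_list (map l [0..<k]) = sum l {..<k}"
          by (simp add: interv_sum_list_conv_sum_set_nat atLeast0LessThan)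
        then show "v \<in> natpermute m k" using l by (simp add: natpermute_def compositions_def)
      qed
      show "(\<lambda>v i. if i < k then v ! i else undefined) ` natpermute m k \<subseteq> compositions k m"
      proof
        fix l assume "l \<in> (\<lambda>v i. if i < k then v ! i else undefined) ` natpermute m k"
        then obtain v where v: "v \<in> natpermute m k" and l: "l = (\<lambda>i. if i < k then v ! i else undefined)" by auto
        have len: "length v = k" and sv: "sum_list v = m" using v by (auto simp: natpermute_def)
        have s: "(\<Sum>i<k. l i) = m" using sv len by (simp add: l sum_list_sum_nth atLeast0LessThan)
        have "\<forall>i<k. l i \<le> m"
        proof (intro allI impI)
          fix i assume "i < k"
          have "l i \<le> (\<Sum>i<k. l i)" using \<open>i<k\<close> by (intro member_le_sum) auto
          then show "l i \<le> m" using s by simp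
        qed
        moreover have "l \<in> extensional {..<k}" by (simp add: l extensional_def)
        ultimately show "l \<in> compositions k m" using s by (auto simp: compositions_def PiE_iff)
      qed
    qed
  qed
  also have "\<dots> = (\<Sum>l\<in>compositions k m. \<Prod>i<k. fps_nth a (l i))"
  proof (intro sum.cong refl)
    fix l assume "l \<in> compositions k m"
    have "{0..k'} = {..<k}" using k by auto
    then show "(\<Prod>j\<in>{0..k'}. fps_nth a (map l [0..<k] ! j)) = (\<Prod>i<k. fps_nth a (l i))"
      by (simp del: upt_Suc)
  qed
  finally show ?thesis .
qed

lemma comp_split:
  fixes a :: "nat \<Rightarrow> real"
  assumes m: "m \<ge> 1" and a0: "a 0 = 1"
  shows "(\<Sum>l\<in>compositions k m. \<Prod>i<k. a (l i)) =
         (\<Sum>l\<in>{l\<in>compositions k m. \<forall>i<k. l i \<le> m-1}. \<Prod>i<k. a (l i)) + real k * a m"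
proof -
  define e where "e = (\<lambda>i j. if j < k then (if j = i then m else 0) else undefined)"
  define P where "P = {l\<in>compositions k m. \<forall>i<k. l i \<le> m-1}"
  have S: "compositions k m = P \<union> e ` {..<k}"
  proof (intro equalityI subsetI)
    fix l assume l: "l \<in> compositions k m"
    show "l \<in> P \<union> e ` {..<k}"
    proof (cases "l \<in> P")
      case False
      then obtain i where i: "i < k" "l i > m - 1" using l by (auto simp: P_def)
      have lm: "\<And>j. j < k \<Longrightarrow> l j \<le> m" using l by (auto simp: compositions_def PiE_def Pi_def)
      have li: "l i = m" using lm[OF i(1)] i(2) m by linarith
      have sum: "(\<Sum>j<k. l j) = m" using l by (simp add: compositions_def)
      have "(\<Sum>j<k. l j) = l i + (\<Sum>j\<in>{..<k}-{i}. l j)"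
        using i(1) by (intro sum.remove) auto
      then have rest: "(\<Sum>j\<in>{..<k}-{i}. l j) = 0" using sum li by simp
      have "l = e i"
      proof
        fix j
        show "l j = e i j"
        proof (cases "j < k")
          case True
          show ?thesis
          proof (cases "j = i")
            case True then show ?thesis using li \<open>j<k\<close> by (simp add: e_def)
          next
            case False
            have "l j \<le> (\<Sum>j\<in>{..<k}-{i}. l j)" using False \<open>j<k\<close> by (intro member_le_sum) auto
            then show ?thesis using rest False \<open>j<k\<close> by (simp add: e_def)
          qed
        next
          case False
          then show ?thesis using l by (auto simp: compositions_def PiE_def extensional_def e_def)
        qed
      qed
      then show ?thesis using i by auto
    qed auto
  next
    fix l assume "l \<in> P \<union> e ` {..<k}"
    then show "l \<in> compositions k m"
    proof
      assume "l \<in> P" then show ?thesis by (simp add: P_def)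
    next
      assume "l \<in> e ` {..<k}"
      then obtain i where i: "i < k" "l = e i" by auto
      have "(\<Sum>j<k. e i j) = (\<Sum>j<k. if j = i then m else 0)" by (intro sum.cong) (auto simp: e_def)
      also have "\<dots> = m" using i by simp
      finally show ?thesis using i by (auto simp: compositions_def e_def PiE_iff extensional_def)
    qed
  qed
  have disj: "P \<inter> e ` {..<k} = {}"
    using m by (auto simp: P_def e_def)
  have inj: "inj_on e {..<k}"
  proof
    fix i i' assume "i \<in> {..<k}" "i' \<in> {..<k}" "e i = e i'"
    then have "e i i = e i' i" by simp
    then show "i = i'" using m \<open>i \<in> {..<k}\<close> by (auto simp: e_def split: if_splits)
  qed
  have fP: "finite P" using finite_compositions[of k m] by (simp add: P_def)
  have "(\<Sum>l\<in>compositions k m. \<Prod>i<k. a (l i)) =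
        (\<Sum>l\<in>P. \<Prod>i<k. a (l i)) + (\<Sum>l\<in>e ` {..<k}. \<Prod>i<k. a (l i))"
    unfolding S by (rule sum.union_disjoint) (use fP disj in auto)
  also have "(\<Sum>l\<in>e ` {..<k}. \<Prod>i<k. a (l i)) = (\<Sum>i<k. \<Prod>j<k. a (e i j))"
    by (rule sum.reindex[OF inj, unfolded comp_def])
  also have "\<dots> = (\<Sum>i<k. a m)"
  proof (rule sum.cong[OF refl])
    fix i assume i: "i \<in> {..<k}"
    have "(\<Prod>j<k. a (e i j)) = a (e i i) * (\<Prod>j\<in>{..<k}-{i}. a (e i j))"
      using i by (intro prod.remove) auto
    also have "(\<Prod>j\<in>{..<k}-{i}. a (e i j)) = 1"
      by (rule prod.neutral) (auto simp: e_def a0)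
    finally show "(\<Prod>j<k. a (e i j)) = a m" using i by (simp add: e_def)
  qed
  finally show ?thesis by (simp add: P_def)
qed

lemma prod_qpow:
  fixes q :: real
  assumes "l \<in> compositions k m"
  shows "(\<Prod>i<k. q ^ (l i) * c (l i)) = q ^ m * (\<Prod>i<k. c (l i))"
proof -
  have "(\<Prod>i<k. q ^ (l i) * c (l i)) = (\<Prod>i<k. q ^ (l i)) * (\<Prod>i<k. c (l i))"
    by (rule prod.distrib)
  also have "(\<Prod>i<k. q ^ (l i)) = q ^ (\<Sum>i<k. l i)" by (rule power_sum[symmetric])
  also have "(\<Sum>i<k. l i) = m" using assms by (simp add: compositions_def)
  finally show ?thesis .
qed

definition dd :: "nat \<Rightarrow> nat \<Rightarrow> real" where
  "dd n j = (-1 / real (2*n+1)) ^ j * c_seq n j"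

definition DD :: "nat \<Rightarrow> real fps" where
  "DD n = Abs_fps (dd n)"

lemma dd_0: "dd n 0 = 1" by (simp add: dd_def c_seq_0)

lemma fps_ident: "DD n ^ (2*n+1) + fps_X * DD n ^ (2*n+2) = 1"
proof (rule fps_ext)
  fix m
  define q where "q = -1 / real (2*n+1)"
  have dq: "dd n = (\<lambda>j. q ^ j * c_seq n j)" by (simp add: dd_def q_def fun_eq_iff)
  show "fps_nth (DD n ^ (2*n+1) + fps_X * DD n ^ (2*n+2)) m = fps_nth 1 m"
  proof (cases m)
    case 0
    then show ?thesis by (simp add: fps_nth_power_0 DD_def dd_0)
  next
    case (Suc m')
    define A where "A = (\<Sum>l\<in>compositions (2*n+2) (m-1). \<Prod>i<2*n+2. c_seq n (l i))"
    define B where "B = (\<Sum>j\<in>{j\<in>compositions (2*n+1) m. \<forall>i<2*n+1. j i \<le> m-1}. \<Prod>i<2*n+1. c_seq n (j i))"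
    have cm: "c_seq n m = A - 1 / real (2*n+1) * B"
      using c_seq_rec[of n m] Suc by (simp add: c_step_def A_def B_def)
    have "fps_nth (DD n ^ (2*n+1)) m = (\<Sum>l\<in>compositions (2*n+1) m. \<Prod>i<2*n+1. dd n (l i))"
      by (subst fps_power_compositions) (simp_all add: DD_def)
    also have "\<dots> = (\<Sum>l\<in>{l\<in>compositions (2*n+1) m. \<forall>i<2*n+1. l i \<le> m-1}. \<Prod>i<2*n+1. dd n (l i))
                    + real (2*n+1) * dd n m"
      by (rule comp_split) (use Suc dd_0 in auto)
    also have "(\<Sum>l\<in>{l\<in>compositions (2*n+1) m. \<forall>i<2*n+1. l i \<le> m-1}. \<Prod>i<2*n+1. dd n (l i))
               = q ^ m * B"
      unfolding B_def sum_distrib_left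
      by (intro sum.cong refl, simp only: dq, rule prod_qpow) auto
    finally have 1: "fps_nth (DD n ^ (2*n+1)) m = q ^ m * B + real (2*n+1) * (q ^ m * c_seq n m)"
      by (simp add: dq)
    have "fps_nth (DD n ^ (2*n+2)) (m-1) = (\<Sum>l\<in>compositions (2*n+2) (m-1). \<Prod>i<2*n+2. dd n (l i))"
      by (subst fps_power_compositions) (simp_all add: DD_def)
    also have "\<dots> = q ^ (m-1) * A"
      unfolding A_def sum_distrib_left
      by (intro sum.cong refl, simp only: dq, rule prod_qpow) auto
    finally have 2: "fps_nth (DD n ^ (2*n+2)) (m-1) = q ^ (m-1) * A" .
    have qm: "q ^ m = q * q ^ (m-1)" using Suc by simp
    have qN: "q * real (2*n+1) = -1" by (simp add: q_def)
    have "fps_nth (DD n ^ (2*n+1) + fps_X * DD n ^ (2*n+2)) m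
          = q ^ m * B + real (2*n+1) * (q ^ m * (A - 1 / real (2*n+1) * B)) + q ^ (m-1) * A"
      using 1 2 cm Suc by (simp add: fps_X_mult_nth)
    also have "\<dots> = q ^ (m-1) * A * (q * real (2*n+1) + 1)"
      unfolding qm by (simp add: field_simps)
    also have "\<dots> = 0" using qN by simp
    finally show ?thesis using Suc by simp
  qed
qed

lemma DD_radius: "fps_conv_radius (DD n) = R_rad n"
proof -
  define q where "q = -1 / real (2*n+1)"
  have q0: "q \<noteq> 0" by (simp add: q_def)
  have "fps_conv_radius (DD n) = conv_radius (\<lambda>j. q ^ j * c_seq n j)"
    by (simp add: fps_conv_radius_def DD_def dd_def q_def)
  also have "\<dots> = conv_radius (c_seq n) / ereal (norm q)"
    by (rule conv_radius_mult_power[OF q0])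
  also have "norm q = 1 / real (2*n+1)" by (simp add: q_def)
  also have "conv_radius (c_seq n) / ereal (1 / real (2*n+1)) =
             inverse (Limsup sequentially (\<lambda>j. ereal (root j \<bar>c_seq n j\<bar>))) * ereal (real (2*n+1))"
    by (simp add: conv_radius_def divide_ereal_def)
  also have "\<dots> = R_rad n"
    by (simp add: R_rad_def divide_ereal_def mult.commute)
  finally show ?thesis .
qed

definition hh :: "nat \<Rightarrow> real \<Rightarrow> real" where
  "hh n u = u^(2*n+1) + u^(2*n+2)"

definition hd :: "nat \<Rightarrow> real \<Rightarrow> real" where
  "hd n u = u^(2*n) * (real (2*n+1) + real (2*n+2) * u)"

lemma hh_deriv: "(hh n has_real_derivative hd n u) (at u)"
proof -
  have "(hh n has_real_derivative (real (2*n+1) * u^(2*n) + real (2*n+2) * u^(2*n+1))) (at u)"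
    unfolding hh_def using DERIV_pow[of "2*n+1" u] DERIV_pow[of "2*n+2" u]
    by (intro DERIV_add) simp_all
  moreover have "real (2*n+1) * u^(2*n) + real (2*n+2) * u^(2*n+1) = hd n u"
    by (simp add: hd_def algebra_simps)
  ultimately show ?thesis by simp
qed

lemma hd_pos:
  assumes "u \<noteq> 0" "u > - real (2*n+1) / real (2*n+2)"
  shows "hd n u > 0"
proof -
  have "u^(2*n) > 0" using assms(1) by (simp add: zero_less_power_eq)
  moreover have "real (2*n+1) + real (2*n+2) * u > 0"
    using assms(2) by (simp add: field_simps)
  ultimately show ?thesis by (simp add: hd_def)
qed

lemma hh_incr_seg:
  assumes "a < b" "\<And>x. a < x \<Longrightarrow> x < b \<Longrightarrow> x \<noteq> 0 \<and> x > - real (2*n+1) / real (2*n+2)"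
  shows "hh n a < hh n b"
proof (rule DERIV_pos_imp_increasing_open[OF assms(1)])
  fix x assume "a < x" "x < b"
  then show "\<exists>y. (hh n has_real_derivative y) (at x) \<and> y > 0"
    using assms(2) hh_deriv hd_pos by blast
next
  show "continuous_on {a..b} (hh n)" unfolding hh_def by (intro continuous_intros)
qed

lemma hh_strict:
  assumes "- real (2*n+1) / real (2*n+2) < u" "u < v"
  shows "hh n u < hh n v"
proof -
  have "real (2*n+1) / real (2*n+2) > 0" by simp
  then have uc: "- real (2*n+1) / real (2*n+2) < 0" by linarith
  consider "v \<le> 0" | "0 \<le> u" | "u < 0" "0 < v" by linarith
  then show ?thesis
  proof cases
    case 1 then show ?thesis using assms by (intro hh_incr_seg) auto
  next
    case 2 then show ?thesis using assms by (intro hh_incr_seg) auto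
  next
    case 3
    have "hh n u < hh n 0" using assms 3 by (intro hh_incr_seg) auto
    also have "hh n 0 < hh n v" using assms 3 uc by (intro hh_incr_seg) auto
    finally show ?thesis .
  qed
qed

lemma hh_inj:
  assumes "- real (2*n+1) / real (2*n+2) < u" "- real (2*n+1) / real (2*n+2) < v" "hh n u = hh n v"
  shows "u = v"
  using hh_strict[of n u v] hh_strict[of n v u] assms by (cases u v rule: linorder_cases) auto

lemma eval_ident:
  assumes r: "ereal \<bar>z\<bar> < R_rad n"
  shows "eval_fps (DD n) z ^ (2*n+1) + z * eval_fps (DD n) z ^ (2*n+2) = 1"
proof -
  have r': "norm z < fps_conv_radius (DD n)" using r by (simp add: DD_radius)
  have p1: "norm z < fps_conv_radius (DD n ^ k)" for k
    using r' fps_conv_radius_power[of "DD n" k] by (rule less_le_trans)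
  have p2: "norm z < fps_conv_radius (fps_X * DD n ^ k)" for k
    using p1[of k] fps_conv_radius_mult[of fps_X "DD n ^ k"] by (simp add: less_le_trans)
  have "1 = eval_fps (1::real fps) z" by simp
  also have "(1::real fps) = DD n ^ (2*n+1) + fps_X * DD n ^ (2*n+2)" by (rule fps_ident[symmetric])
  also have "eval_fps \<dots> z = eval_fps (DD n ^ (2*n+1)) z + eval_fps (fps_X * DD n ^ (2*n+2)) z"
    by (rule eval_fps_add[OF p1 p2])
  also have "eval_fps (fps_X * DD n ^ (2*n+2)) z = z * eval_fps (DD n ^ (2*n+2)) z"
  proof -
    have "eval_fps (fps_X * DD n ^ (2*n+2)) z = eval_fps fps_X z * eval_fps (DD n ^ (2*n+2)) z"
      by (rule eval_fps_mult) (simp, rule p1)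
    then show ?thesis by simp
  qed
  finally show ?thesis by (simp only: eval_fps_power[OF r'])
qed

lemma phi_eq:
  assumes r: "ereal \<bar>z\<bar> < R_rad n"
  shows "hh n (z * eval_fps (DD n) z) = z ^ (2*n+1)"
proof -
  have "hh n (z * eval_fps (DD n) z) = z^(2*n+1) * (eval_fps (DD n) z ^ (2*n+1) + z * eval_fps (DD n) z ^ (2*n+2))"
    by (simp add: hh_def power_mult_distrib algebra_simps)
  then show ?thesis using eval_ident[OF r] by simp
qed

lemma phi_gt:
  assumes r: "ereal \<bar>z\<bar> < R_rad n"
  shows "z * eval_fps (DD n) z > - real (2*n+1) / real (2*n+2)"
proof -
  define uc where "uc = - real (2*n+1) / real (2*n+2)"
  define U where "U = eball (0::real) (R_rad n)"
  define \<phi> where "\<phi> = (\<lambda>z. z * eval_fps (DD n) z)"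
  have U: "x \<in> U \<longleftrightarrow> ereal \<bar>x\<bar> < R_rad n" for x by (simp add: U_def)
  have "real (2*n+1) / real (2*n+2) > 0" by simp
  then have uc0: "uc < 0" unfolding uc_def by linarith
  have cont: "continuous_on U \<phi>"
    unfolding \<phi>_def U_def DD_radius[symmetric]
    by (intro continuous_intros continuous_on_eval_fps) auto
  have ne: "\<phi> x \<noteq> uc" if x: "x \<in> U" for x
  proof
    assume eq: "\<phi> x = uc"
    have xr: "norm x < fps_conv_radius (DD n)" using x by (simp add: U DD_radius)
    have d1: "(\<phi> has_real_derivative (eval_fps (DD n) x + x * eval_fps (fps_deriv (DD n)) x)) (at x)"
      unfolding \<phi>_def
      using DERIV_mult[OF DERIV_ident has_field_derivative_eval_fps[OF xr, of UNIV]] by (simp add: mult.commute)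
    have "((\<lambda>z. hh n (\<phi> z)) has_real_derivative hd n (\<phi> x) * (eval_fps (DD n) x + x * eval_fps (fps_deriv (DD n)) x)) (at x)"
      using DERIV_chain2[OF hh_deriv d1] by simp
    moreover have "hd n (\<phi> x) = 0" unfolding eq uc_def hd_def by (simp add: field_simps)
    ultimately have "((\<lambda>z. hh n (\<phi> z)) has_real_derivative 0) (at x)" by simp
    then have "((\<lambda>z. z ^ (2*n+1)) has_real_derivative 0) (at x)"
      by (rule has_field_derivative_transform_within_open[where S = U])
         (use x in \<open>auto simp: U_def \<phi>_def phi_eq\<close>)
    moreover have "((\<lambda>z. z ^ (2*n+1)) has_real_derivative real (2*n+1) * x ^ (2*n)) (at x)"
      using DERIV_pow[of "2*n+1" x] by simp
    ultimately have "real (2*n+1) * x ^ (2*n) = 0" using DERIV_unique by blast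
    then have "x = 0" by simp
    then show False using eq uc0 by (simp add: \<phi>_def)
  qed
  have z: "z \<in> U" using r by (simp add: U)
  show ?thesis
  proof (rule ccontr)
    assume "\<not> ?thesis"
    then have le: "\<phi> z \<le> uc" by (simp add: \<phi>_def uc_def)
    have sub: "{min z 0..max z 0} \<subseteq> U"
    proof
      fix x assume "x \<in> {min z 0..max z 0}"
      then have "\<bar>x\<bar> \<le> \<bar>z\<bar>" by auto
      then show "x \<in> U" using r by (simp add: U) (meson ereal_less_eq(3) order_le_less_trans)
    qed
    have "\<exists>x. min z 0 \<le> x \<and> x \<le> max z 0 \<and> \<phi> x = uc"
    proof (cases "z \<ge> 0")
      case True
      then show ?thesis using IVT2'[of \<phi> z uc 0] le uc0 continuous_on_subset[OF cont sub]
        by (auto simp: \<phi>_def)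
    next
      case False
      then show ?thesis using IVT'[of \<phi> z uc 0] le uc0 continuous_on_subset[OF cont sub]
        by (auto simp: \<phi>_def)
    qed
    then obtain x where "min z 0 \<le> x" "x \<le> max z 0" "\<phi> x = uc" by blast
    then show False using ne[of x] sub by auto
  qed
qed

theorem lemmaA2:
  fixes n :: nat and I :: "real set" and xs ys a1 :: real and y a2 :: "real \<Rightarrow> real"
  assumes n: "n \<ge> 1"
    and I: "is_interval I" and xsI: "xs \<in> I"
    and yC: "C_k_1 (2*n+1) I y"
    and a1: "a1 > 0"
    and a2: "continuous_on I a2"
    and yeq: "\<And>x. x \<in> I \<Longrightarrow> y x = ys + a1 * (x - xs)^(2*n+1) + a2 x * (x - xs)^(2*n+2)"
  defines "J \<equiv> {x \<in> I. ereal (\<bar>a2 x\<bar>^(2*n+1) * \<bar>y x - ys\<bar>) < ereal (a1^(2*n+2)) * R_rad n ^ (2*n+1)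
                       \<and> (real (2*n+2) * a2 x * (x - xs)) / (real (2*n+1) * a1) > -1}"
  shows "\<forall>x \<in> connected_component_set J xs.
           summable (\<lambda>j. (- a2 x / (real (2*n+1) * a1))^j * c_seq n j * (root (2*n+1) ((y x - ys) / a1))^j)
         \<and> x - xs = root (2*n+1) ((y x - ys) / a1) *
             (\<Sum>j. (- a2 x / (real (2*n+1) * a1))^j * c_seq n j * (root (2*n+1) ((y x - ys) / a1))^j)"
proof
  fix x assume "x \<in> connected_component_set J xs"
  then have xJ: "x \<in> J" using connected_component_subset by blast
  then have xI: "x \<in> I"
    and c1: "ereal (\<bar>a2 x\<bar>^(2*n+1) * \<bar>y x - ys\<bar>) < ereal (a1^(2*n+2)) * R_rad n ^ (2*n+1)"
    and c2: "(real (2*n+2) * a2 x * (x - xs)) / (real (2*n+1) * a1) > -1"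
    by (auto simp: J_def)
  define N where "N = 2*n+1"
  define t where "t = x - xs"
  define b where "b = a2 x / a1"
  define s where "s = (y x - ys) / a1"
  define w where "w = root N s"
  define z where "z = b * w"
  have oddN: "odd N" by (simp add: N_def)
  have s_eq: "s = t^N + b * t^(N+1)"
    using yeq[OF xI] a1 by (simp add: s_def t_def b_def N_def field_simps)
  have wN: "w ^ N = s" unfolding w_def using oddN by (rule odd_real_root_pow)
  have trm: "(- a2 x / (real N * a1))^j * c_seq n j * w^j = dd n j * z^j" for j
  proof -
    have "(- a2 x / (real N * a1)) * w = (-1 / real N) * z"
      using a1 by (simp add: z_def b_def N_def field_simps)
    then have "(- a2 x / (real N * a1))^j * w^j = (-1 / real N)^j * z^j"
      by (metis power_mult_distrib)
    then show ?thesis by (simp add: dd_def N_def algebra_simps)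
  qed
  have zr: "ereal \<bar>z\<bar> < R_rad n"
  proof (rule ccontr)
    assume "\<not> ?thesis"
    then have Rle: "R_rad n \<le> ereal \<bar>z\<bar>" by simp
    have R0: "R_rad n \<ge> 0" unfolding DD_radius[symmetric] fps_conv_radius_def by (rule conv_radius_nonneg)
    obtain r where r: "R_rad n = ereal r" "0 \<le> r" "r \<le> \<bar>z\<bar>"
      using Rle R0 by (cases "R_rad n") auto
    have zN: "\<bar>z\<bar>^N = \<bar>b\<bar>^N * \<bar>s\<bar>" by (simp add: z_def power_mult_distrib abs_mult wN[symmetric] power_abs)
    have key: "a1^(N+1) * \<bar>z\<bar>^N = \<bar>a2 x\<bar>^N * \<bar>y x - ys\<bar>"
      using a1 by (simp add: zN b_def s_def abs_divide power_divide field_simps)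
    have "\<bar>a2 x\<bar>^N * \<bar>y x - ys\<bar> < a1^(N+1) * r^N"
      using c1 r(1) by (simp add: N_def)
    also have "\<dots> \<le> a1^(N+1) * \<bar>z\<bar>^N"
      using a1 r by (intro mult_left_mono power_mono) auto
    finally show False using key by simp
  qed
  have zr': "norm z < fps_conv_radius (DD n)" using zr by (simp add: DD_radius)
  have sums: "(\<lambda>j. dd n j * z^j) sums eval_fps (DD n) z"
    using sums_eval_fps[OF zr'] by (simp add: DD_def)
  have main: "t = w * eval_fps (DD n) z"
  proof (cases "b = 0")
    case True
    have "w = t" using True s_eq oddN by (simp add: w_def odd_real_root_power_cancel)
    moreover have "eval_fps (DD n) z = 1" using True by (simp add: z_def eval_fps_at_0 DD_def dd_0)
    ultimately show ?thesis by simp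
  next
    case False
    define u where "u = b * t"
    have "real (2*n+2) * a2 x * (x - xs) / (real (2*n+1) * a1) = real (2*n+2) * u / real (2*n+1)"
      using a1 by (simp add: u_def b_def t_def field_simps)
    then have "real (2*n+2) * u / real (2*n+1) > -1" using c2 by simp
    then have "real (2*n+2) * u > - real (2*n+1)" by (simp add: field_simps)
    then have ugt: "u > - real (2*n+1) / real (2*n+2)" by (simp add: field_simps)
    have "hh n u = b^N * s"
      by (simp add: hh_def u_def s_eq N_def power_mult_distrib algebra_simps)
    also have "\<dots> = z^N" unfolding z_def power_mult_distrib wN ..
    also have "\<dots> = hh n (z * eval_fps (DD n) z)"
      using phi_eq[OF zr] by (simp only: N_def)
    finally have "u = z * eval_fps (DD n) z"
      using hh_inj[OF ugt phi_gt[OF zr]] by simp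
    then have "b * t = b * (w * eval_fps (DD n) z)" by (simp add: u_def z_def)
    then show ?thesis using False by simp
  qed
  have "(\<lambda>j. (- a2 x / (real (2*n+1) * a1))^j * c_seq n j * (root (2*n+1) ((y x - ys) / a1))^j)
        sums eval_fps (DD n) z"
    using sums trm by (simp add: N_def w_def s_def)
  then show "summable (\<lambda>j. (- a2 x / (real (2*n+1) * a1))^j * c_seq n j * (root (2*n+1) ((y x - ys) / a1))^j)
         \<and> x - xs = root (2*n+1) ((y x - ys) / a1) *
             (\<Sum>j. (- a2 x / (real (2*n+1) * a1))^j * c_seq n j * (root (2*n+1) ((y x - ys) / a1))^j)"
    using main by (simp add: sums_iff t_def w_def s_def N_def)
qed

end
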